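(* Let $\boldsymbol\mu\in\mathbb R^N$ with $\boldsymbol\mu\geq\mathbf 0$. There exists a power vector $\mathbf p^*\in\mathbb R^N$, $\mathbf p^*\geq\mathbf 0$, with $\Gamma(\mathbf p^* )=\boldsymbol\mu$ if and only if there exists a power vector $\mathbf p'\in\mathbb R^N$, $\mathbf p'\geq\mathbf 0$, with $\Gamma(\mathbf p')\geq\boldsymbol\mu$.
   Context: Multicast system: $N\geq 2$ transmitters $T_1,\dots,T_N$; transmitter $T_i$ has $K_i\geq 1$ receivers $R_i^{k}$, $k\in\mathcal K_i=\{1,\dots,K_i\}$. The channel gain from $T_j$ to $R_i^{k}$ is $g_{r_i^{k},t_j}\geq 0$, with direct gains $g_{r_i^{k},t_i}>0$; the noise variance is $\sigma^2>0$. For $\mathbf p=(p_1,\dots,p_N)^T\geq\mathbf 0$ the SINR of $R_i^k$ is $\gamma_i^{k}(\mathbf p)=\frac{g_{r_i^{k},t_i}p_i}{\sum_{j\neq i}g_{r_i^{k},t_j}p_j+\sigma^2}$, the SINR of session $i$ is $\gamma_i(\mathbf p)=\min_{k\in\mathcal K_i}\gamma_i^{k}(\mathbf p)$, and $\Gamma(\mathbf p)=(\gamma_1(\mathbf p),\dots,\gamma_N(\mathbf p))$. Vector inequalities are componentwise. *)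

theory Defs
  imports Complex_Main
begin

(* Transmitters are indexed by i \<in> {0..<N}; transmitter i has receivers k \<in> {0..<K i}.
   g i k j is the channel gain from transmitter j to receiver k of transmitter i.
   Power vectors are functions p :: nat \<Rightarrow> real, only the entries p j, j < N, matter. *)

definition sinr_rx ::
  "nat \<Rightarrow> (nat \<Rightarrow> nat \<Rightarrow> nat \<Rightarrow> real) \<Rightarrow> real \<Rightarrow> (nat \<Rightarrow> real) \<Rightarrow> nat \<Rightarrow> nat \<Rightarrow> real" where
  "sinr_rx N g \<sigma>2 p i k =
     g i k i * p i / ((\<Sum>j\<in>{0..<N} - {i}. g i k j * p j) + \<sigma>2)"

definition sinr_session ::
  "nat \<Rightarrow> (nat \<Rightarrow> nat) \<Rightarrow> (nat \<Rightarrow> nat \<Rightarrow> nat \<Rightarrow> real) \<Rightarrow> real \<Rightarrow> (nat \<Rightarrow> real) \<Rightarrow> nat \<Rightarrow> real" where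
  "sinr_session N K g \<sigma>2 p i = Min ((\<lambda>k. sinr_rx N g \<sigma>2 p i k) ` {0..<K i})"

end

theory Submission
  imports Defs
begin

definition MM :: "nat \<Rightarrow> (nat \<Rightarrow> nat) \<Rightarrow> (nat \<Rightarrow> nat \<Rightarrow> nat \<Rightarrow> real) \<Rightarrow> real \<Rightarrow> (nat \<Rightarrow> real) \<Rightarrow> nat \<Rightarrow> real" where
  "MM N K g s p i = Max ((\<lambda>k. ((\<Sum>j\<in>{0..<N} - {i}. g i k j * p j) + s) / g i k i) ` {0..<K i})"

lemma MM_pos:
  assumes "K i \<ge> 1" "\<forall>k<K i. \<forall>j<N. g i k j \<ge> 0" "\<forall>k<K i. g i k i > 0" "s > 0"
    "\<forall>j<N. p j \<ge> 0"
  shows "MM N K g s p i > 0"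
proof -
  have "0 < K i" using assms(1) by simp
  have D: "((\<Sum>j\<in>{0..<N} - {i}. g i 0 j * p j) + s) / g i 0 i > 0"
  proof -
    have "(\<Sum>j\<in>{0..<N} - {i}. g i 0 j * p j) \<ge> 0"
      using assms(2,5) \<open>0 < K i\<close> by (intro sum_nonneg) auto
    thus ?thesis using assms(3,4) \<open>0 < K i\<close> by auto
  qed
  have "((\<Sum>j\<in>{0..<N} - {i}. g i 0 j * p j) + s) / g i 0 i \<le> MM N K g s p i"
    unfolding MM_def using \<open>0 < K i\<close> by (intro Max_ge) auto
  thus ?thesis using D by linarith
qed

lemma MM_mono:
  assumes "K i \<ge> 1" "\<forall>k<K i. \<forall>j<N. g i k j \<ge> 0" "\<forall>k<K i. g i k i > 0"
    "\<forall>j<N. p j \<le> q j"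
  shows "MM N K g s p i \<le> MM N K g s q i"
  unfolding MM_def
proof (subst Max_le_iff, simp, use assms(1) in force, clarify)
  fix k assume k: "k \<in> {0..<K i}"
  have "(\<Sum>j\<in>{0..<N} - {i}. g i k j * p j) \<le> (\<Sum>j\<in>{0..<N} - {i}. g i k j * q j)"
    using assms(2,4) k by (intro sum_mono mult_left_mono) auto
  hence "((\<Sum>j\<in>{0..<N} - {i}. g i k j * p j) + s) / g i k i
      \<le> ((\<Sum>j\<in>{0..<N} - {i}. g i k j * q j) + s) / g i k i"
    using assms(3) k by (intro divide_right_mono) auto
  also have "\<dots> \<le> Max ((\<lambda>k. ((\<Sum>j\<in>{0..<N} - {i}. g i k j * q j) + s) / g i k i) ` {0..<K i})"
    using k by (intro Max_ge) auto
  finally show "((\<Sum>j\<in>{0..<N} - {i}. g i k j * p j) + s) / g i k i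
      \<le> Max ((\<lambda>k. ((\<Sum>j\<in>{0..<N} - {i}. g i k j * q j) + s) / g i k i) ` {0..<K i})" .
qed

lemma sinr_MM:
  assumes "K i \<ge> 1" "\<forall>k<K i. \<forall>j<N. g i k j \<ge> 0" "\<forall>k<K i. g i k i > 0" "s > 0"
    "\<forall>j<N. p j \<ge> 0" "i < N"
  shows "sinr_session N K g s p i = p i / MM N K g s p i"
proof -
  let ?h = "\<lambda>k. ((\<Sum>j\<in>{0..<N} - {i}. g i k j * p j) + s) / g i k i"
  have hpos: "?h k > 0" if "k < K i" for k
  proof -
    have "(\<Sum>j\<in>{0..<N} - {i}. g i k j * p j) \<ge> 0"
      using assms(2,5) that by (intro sum_nonneg) auto
    thus ?thesis using assms(3,4) that by auto
  qed
  have eq: "sinr_rx N g s p i k = p i / ?h k" if "k < K i" for k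
    unfolding sinr_rx_def using assms(3) that by (simp add: field_simps)
  have ne: "{0..<K i} \<noteq> {}" using assms(1) by auto
  have "MM N K g s p i \<in> ?h ` {0..<K i}" unfolding MM_def using ne by (intro Max_in) auto
  then obtain k0 where k0: "k0 < K i" "MM N K g s p i = ?h k0" by auto
  show ?thesis unfolding sinr_session_def
  proof (rule Min_eqI)
    show "finite ((\<lambda>k. sinr_rx N g s p i k) ` {0..<K i})" by simp
    show "p i / MM N K g s p i \<in> (\<lambda>k. sinr_rx N g s p i k) ` {0..<K i}"
      using k0 eq by force
    fix y assume "y \<in> (\<lambda>k. sinr_rx N g s p i k) ` {0..<K i}"
    then obtain k where k: "k < K i" "y = sinr_rx N g s p i k" by auto
    have a1: "?h k \<le> MM N K g s p i" unfolding MM_def using k by (intro Max_ge) auto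
    have a2: "0 < ?h k" using hpos[OF k(1)] .
    have a3: "0 \<le> p i" using assms(5,6) by auto
    have a4: "0 < MM N K g s p i" using a1 a2 by linarith
    have "p i / MM N K g s p i \<le> p i / ?h k"
      by (rule divide_left_mono[OF a1 a3 mult_pos_pos[OF a4 a2]])
    thus "p i / MM N K g s p i \<le> y" using k eq by simp
  qed
qed

theorem proposition1:
  fixes N :: nat and K :: "nat \<Rightarrow> nat" and g :: "nat \<Rightarrow> nat \<Rightarrow> nat \<Rightarrow> real"
    and \<sigma>2 :: real and \<mu> :: "nat \<Rightarrow> real"
  assumes N2: "N \<ge> 2"
    and K1: "\<forall>i<N. K i \<ge> 1"
    and g_nonneg: "\<forall>i<N. \<forall>k<K i. \<forall>j<N. g i k j \<ge> 0"
    and g_direct: "\<forall>i<N. \<forall>k<K i. g i k i > 0"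
    and sigma_pos: "\<sigma>2 > 0"
    and mu_nonneg: "\<forall>i<N. \<mu> i \<ge> 0"
  shows "(\<exists>p::nat \<Rightarrow> real. (\<forall>i<N. p i \<ge> 0) \<and> (\<forall>i<N. sinr_session N K g \<sigma>2 p i = \<mu> i))
     \<longleftrightarrow> (\<exists>p::nat \<Rightarrow> real. (\<forall>i<N. p i \<ge> 0) \<and> (\<forall>i<N. sinr_session N K g \<sigma>2 p i \<ge> \<mu> i))"
proof
  assume "\<exists>p::nat \<Rightarrow> real. (\<forall>i<N. p i \<ge> 0) \<and> (\<forall>i<N. sinr_session N K g \<sigma>2 p i = \<mu> i)"
  then show "\<exists>p::nat \<Rightarrow> real. (\<forall>i<N. p i \<ge> 0) \<and> (\<forall>i<N. sinr_session N K g \<sigma>2 p i \<ge> \<mu> i)"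
    by (metis order_refl)
next
  assume "\<exists>p::nat \<Rightarrow> real. (\<forall>i<N. p i \<ge> 0) \<and> (\<forall>i<N. sinr_session N K g \<sigma>2 p i \<ge> \<mu> i)"
  then obtain p' where p'0: "\<forall>i<N. p' i \<ge> 0" and p'g: "\<forall>i<N. sinr_session N K g \<sigma>2 p' i \<ge> \<mu> i"
    by blast
  define M where "M = MM N K g \<sigma>2"
  have Mpos: "M p i > 0" if "i < N" "\<forall>j<N. p j \<ge> 0" for p i
    unfolding M_def using K1 g_nonneg g_direct sigma_pos that by (intro MM_pos) auto
  have Mmono: "M p i \<le> M q i" if "i < N" "\<forall>j<N. p j \<le> q j" for p q i
    unfolding M_def using K1 g_nonneg g_direct that by (intro MM_mono) auto
  have sM: "sinr_session N K g \<sigma>2 p i = p i / M p i" if "i < N" "\<forall>j<N. p j \<ge> 0" for p i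
    unfolding M_def using K1 g_nonneg g_direct sigma_pos that by (intro sinr_MM) auto
  have p'I: "\<mu> i * M p' i \<le> p' i" if "i < N" for i
  proof -
    have "\<mu> i \<le> p' i / M p' i" using p'g sM[OF that p'0] that by auto
    thus ?thesis using Mpos[OF that p'0] by (simp add: field_simps)
  qed
  define S where "S = {q. (\<forall>j<N. 0 \<le> q j \<and> q j \<le> p' j) \<and> (\<forall>i<N. \<mu> i * M q i \<le> q i)}"
  have p'S: "p' \<in> S" unfolding S_def using p'0 p'I by auto
  define ps where "ps j = Inf ((\<lambda>q. q j) ` S)" for j
  have bdd: "bdd_below ((\<lambda>q. q j) ` S)" if "j < N" for j
    unfolding S_def using that by (intro bdd_belowI[of _ 0]) auto
  have ps_le: "ps j \<le> q j" if "j < N" "q \<in> S" for j q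
    unfolding ps_def using bdd[OF that(1)] that(2) by (intro cInf_lower) auto
  have ps_ge: "c \<le> ps j" if "\<And>q. q \<in> S \<Longrightarrow> c \<le> q j" for c j
    unfolding ps_def using p'S that by (intro cInf_greatest) auto
  have ps0: "\<forall>j<N. 0 \<le> ps j" using ps_ge S_def by auto
  have psp': "\<forall>j<N. ps j \<le> p' j" using ps_le p'S by auto
  have Ips: "\<mu> i * M ps i \<le> ps i" if "i < N" for i
  proof (rule ps_ge)
    fix q assume q: "q \<in> S"
    have "M ps i \<le> M q i" using Mmono[OF that] ps_le q by auto
    hence "\<mu> i * M ps i \<le> \<mu> i * M q i" using mu_nonneg that by (intro mult_left_mono) auto
    also have "\<dots> \<le> q i" using q that unfolding S_def by auto
    finally show "\<mu> i * M ps i \<le> q i" .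
  qed
  define r where "r i = \<mu> i * M ps i" for i
  have r0: "\<forall>j<N. 0 \<le> r j" unfolding r_def using mu_nonneg Mpos ps0
    by (metis less_imp_le mult_nonneg_nonneg)
  have rps: "\<forall>j<N. r j \<le> ps j" unfolding r_def using Ips by auto
  have rS: "r \<in> S" unfolding S_def
  proof (intro CollectI conjI allI impI)
    fix j assume j: "j < N"
    show "0 \<le> r j" using r0 j by auto
    show "r j \<le> p' j" using rps psp' j by force
  next
    fix i assume i: "i < N"
    have "M r i \<le> M ps i" using Mmono[OF i] rps by auto
    thus "\<mu> i * M r i \<le> r i" unfolding r_def using mu_nonneg i by (intro mult_left_mono) auto
  qed
  have fixp: "ps i = \<mu> i * M ps i" if "i < N" for i
    using ps_le[OF that rS] Ips[OF that] unfolding r_def by auto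
  show "\<exists>p::nat \<Rightarrow> real. (\<forall>i<N. p i \<ge> 0) \<and> (\<forall>i<N. sinr_session N K g \<sigma>2 p i = \<mu> i)"
  proof (intro exI conjI allI impI)
    fix i assume i: "i < N"
    show "0 \<le> ps i" using ps0 i by auto
    have "sinr_session N K g \<sigma>2 ps i = ps i / M ps i" using sM[OF i ps0] .
    also have "\<dots> = \<mu> i" using fixp[OF i] Mpos[OF i ps0] by (simp add: field_simps)
    finally show "sinr_session N K g \<sigma>2 ps i = \<mu> i" .
  qed
qed

end
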